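(* Let $r>0$ and $t\ge1$ be real numbers, and set $p=\lceil tr\rceil-\lceil r\rceil$ and $q=\lceil r\rceil-1$. Consider any nonincreasing sequence of nonnegative reals $$t-1,\ a_1,a_2,\dots,a_p,\ b_1,b_2,\dots,b_q$$ (of total length $\lceil tr\rceil$) in which $a_1,\dots,a_p$ is an arithmetic progression with common difference $-1/r$. If $t-1-a_1\le 1/r$ (a condition that is vacuous when $p=0$), then the average of the entire sequence is at least $\frac{t-2+1/t}{2}$. *)

theory Defs
  imports Complex_Main
begin

definition full_seq :: "real \<Rightarrow> (nat \<Rightarrow> real) \<Rightarrow> (nat \<Rightarrow> real) \<Rightarrow> nat \<Rightarrow> nat \<Rightarrow> real" where
  "full_seq t a b p i = (if i = 0 then t - 1 else if i \<le> p then a i else b (i - p))"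

end

theory Submission
  imports Defs
begin

lemma b1: "real p \<le> x \<Longrightarrow> x < real p + 1 \<Longrightarrow> (p+1)*(2*x - p) \<ge> x*(x+1)"
proof -
  assume a: "real p \<le> x" "x < real p + 1"
  have "(p+1)*(2*x - p) - x*(x+1) = (x - p)*(p+1-x)" by (simp add: algebra_simps)
  also have "\<dots> \<ge> 0" using a by simp
  finally show ?thesis by simp
qed
lemma c1: "(N::real) * u / (u+1) \<le> x + 1 \<Longrightarrow> x \<ge> 0 \<Longrightarrow> N * u * x / (u+1) \<le> x*(x+1)"
proof -
  assume a: "N * u / (u+1) \<le> x + 1" "x \<ge> 0"
  have "N * u * x / (u+1) = (N * u / (u+1)) * x" by simp
  also have "\<dots> \<le> (x+1)*x" using a by (intro mult_right_mono) auto
  finally show ?thesis by (simp add: algebra_simps)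
qed
lemma eqN: "u + 1 \<noteq> (0::real) \<Longrightarrow> r \<noteq> 0 \<Longrightarrow> u^2/(2*(u+1)) * N = (N * u * (u*r) / (u+1)) / (2*r)"
proof -
  assume a: "u + 1 \<noteq> (0::real)" "r \<noteq> 0"
  have "(N * u * (u*r) / (u+1)) / (2*r) = (r*(N*u*u)) / (r*(2*(u+1)))" by (simp only: divide_divide_eq_left ac_simps)
  also have "\<dots> = (N*u*u) / (2*(u+1))" using a(2) by (rule mult_divide_mult_cancel_left)
  finally show ?thesis by (simp add: power2_eq_square ac_simps)
qed
lemma fin:
  fixes u r A S :: real and p N :: nat
  assumes u: "u \<ge> 0" and r: "r > 0" and p1: "real p + 1 > u*r" and N: "N > 0"
    and Nlt: "real N < (u+1)*r + 1" and A1: "A \<ge> u - 1/r"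
    and A2: "p \<ge> 1 \<Longrightarrow> A \<ge> (real p - 1)/r"
    and S: "S \<ge> u + p*A - real p*(real p - 1)/(2*r)"
  shows "S / N \<ge> ((u+1) - 2 + 1/(u+1))/2"
proof -
  define x where "x = u*r"
  have x0: "x \<ge> 0" using u r by (simp add: x_def)
  have rhs: "((u+1) - 2 + 1/(u+1))/2 = u^2/(2*(u+1))" using u by (simp add: field_simps power2_eq_square)
  have Nu: "real N * u / (u+1) \<le> x + 1"
  proof -
    have "real N * u \<le> ((u+1)*r + 1) * u" using Nlt u by (simp add: mult_right_mono)
    also have "\<dots> \<le> (x+1)*(u+1)" using u r by (simp add: x_def algebra_simps)
    finally show ?thesis using u by (simp add: field_simps)
  qed
  have key: "2*r*S \<ge> real N * u * x / (u+1)"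
  proof (cases "x \<ge> p")
    case True
    have "2*r*S \<ge> 2*r*(u + p*(u - 1/r) - real p*(real p - 1)/(2*r))"
    proof -
      have "p*A \<ge> p*(u-1/r)" using A1 by (simp add: mult_left_mono)
      then show ?thesis using S r by (simp add: mult_left_mono)
    qed
    also have "2*r*(u + p*(u - 1/r) - real p*(real p - 1)/(2*r)) = (p+1)*(2*x - p)"
      using r unfolding x_def by (simp add: algebra_simps add_divide_distrib diff_divide_distrib)
    finally have a: "2*r*S \<ge> (p+1)*(2*x - p)" .
    have b: "(p+1)*(2*x - p) \<ge> x*(x+1)" using True p1 unfolding x_def by (intro b1) auto
    have c: "real N * u * x / (u+1) \<le> x*(x+1)" using Nu x0
      by (intro c1)
    show ?thesis using a b c by linarith
  next
    case False
    then have p1': "p \<ge> 1" using x0 by (cases p) auto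
    have "2*r*S \<ge> 2*r*(u + p*((real p - 1)/r) - real p*(real p - 1)/(2*r))"
    proof -
      have "p*A \<ge> p*((real p - 1)/r)" using A2[OF p1'] by (intro mult_left_mono) auto
      then show ?thesis using S r by (simp add: mult_left_mono)
    qed
    also have "2*r*(u + p*((real p - 1)/r) - real p*(real p - 1)/(2*r)) = 2*x + p*(real p-1)"
      using r unfolding x_def by (simp add: algebra_simps add_divide_distrib diff_divide_distrib)
    finally have a: "2*r*S \<ge> 2*x + p*(real p-1)" .
    have b: "2*x + p*(real p-1) \<ge> x*(x+1)"
    proof (cases "x \<le> 1")
      case True
      have "x*(x-1) \<le> 0" using True x0 by (intro mult_nonneg_nonpos) auto
      moreover have "p*(real p-1) \<ge> 0" using p1' by simp
      ultimately show ?thesis by (simp add: algebra_simps)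
    next
      case f: False
      have "x*(x-1) \<le> p*(real p-1)" using False f by (intro mult_mono) auto
      then show ?thesis by (simp add: algebra_simps)
    qed
    have c: "real N * u * x / (u+1) \<le> x*(x+1)" using Nu x0
      by (intro c1)
    show ?thesis using a b c by linarith
  qed
  have "u^2/(2*(u+1)) \<le> S / N"
  proof -
    have u1: "u + 1 \<noteq> 0" "r \<noteq> 0" using u r by auto
    have "u^2/(2*(u+1)) * N = (real N * u * x / (u+1)) / (2*r)" unfolding x_def using u1 by (rule eqN)
    also have "\<dots> \<le> S" using key r by (subst pos_divide_le_eq) (auto simp: ac_simps)
    finally show ?thesis using N by (simp add: field_simps)
  qed
  then show ?thesis unfolding rhs .
qed

lemma arith_sum: "(\<Sum>i\<in>{1..n}. (A - (real i - 1)/r)) = real n * A - real n*(real n - 1)/(2*r)"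
proof (induction n)
  case 0 then show ?case by simp
next
  case (Suc n)
  have "(\<Sum>i\<in>{1..Suc n}. (A - (real i - 1)/r)) = (\<Sum>i\<in>{1..n}. (A - (real i - 1)/r)) + (A - real n / r)"
    by simp
  also have "\<dots> = real n * A - real n*(real n - 1)/(2*r) + (A - real n / r)" using Suc by simp
  also have "\<dots> = real (Suc n) * A - real (Suc n)*(real (Suc n) - 1)/(2*r)"
    by (simp add: algebra_simps add_divide_distrib diff_divide_distrib)
  finally show ?case .
qed

theorem mainTheorem16:
  fixes r t :: real and a b :: "nat \<Rightarrow> real" and p q :: nat
  assumes r_pos: "r > 0" and t_ge: "t \<ge> 1"
    and p_def: "int p = \<lceil>t * r\<rceil> - \<lceil>r\<rceil>"
    and q_def: "int q = \<lceil>r\<rceil> - 1"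
    and nonneg: "\<forall>i \<le> p + q. full_seq t a b p i \<ge> 0"
    and noninc: "\<forall>i < p + q. full_seq t a b p (Suc i) \<le> full_seq t a b p i"
    and arith: "\<forall>i. 1 \<le> i \<and> i < p \<longrightarrow> a (Suc i) = a i - 1 / r"
    and first_gap: "p \<ge> 1 \<longrightarrow> t - 1 - a 1 \<le> 1 / r"
  shows "(\<Sum>i \<le> p + q. full_seq t a b p i) / real (p + q + 1) \<ge> (t - 2 + 1 / t) / 2"
proof -
  define u where "u = t - 1"
  have tu: "t = u + 1" by (simp add: u_def)
  have N: "int (p + q + 1) = \<lceil>t * r\<rceil>" using p_def q_def by simp
  have Nlt: "real (p+q+1) < (u+1)*r + 1"
  proof -
    have "real_of_int \<lceil>t * r\<rceil> < t*r + 1" by linarith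
    then show ?thesis using N tu by (metis of_int_of_nat_eq)
  qed
  have p1: "real p + 1 > u * r"
  proof -
    have "real_of_int \<lceil>t * r\<rceil> \<ge> t*r" by linarith
    moreover have "real_of_int \<lceil>r\<rceil> < r + 1" by linarith
    moreover have "real p = real_of_int \<lceil>t * r\<rceil> - real_of_int \<lceil>r\<rceil>" using p_def by (metis of_int_diff of_int_of_nat_eq)
    moreover have "u * r = t * r - r" unfolding u_def by (simp add: algebra_simps)
    ultimately show ?thesis by linarith
  qed
  have aform: "\<And>i. 1 \<le> i \<Longrightarrow> i \<le> p \<Longrightarrow> a i = a 1 - (real i - 1)/r"
  proof -
    fix i :: nat assume "1 \<le> i" "i \<le> p"
    then show "a i = a 1 - (real i - 1)/r"
    proof (induction i rule: dec_induct)
      case base then show ?case by simp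
    next
      case (step n)
      then have "a (Suc n) = a n - 1/r" using arith by simp
      also have "\<dots> = a 1 - (real (Suc n) - 1)/r" using step by (simp add: diff_divide_distrib)
      finally show ?case .
    qed
  qed
  define S where "S = (\<Sum>i \<le> p + q. full_seq t a b p i)"
  have "S \<ge> (\<Sum>i \<le> p. full_seq t a b p i)"
    unfolding S_def using nonneg by (intro sum_mono2) auto
  moreover have "(\<Sum>i \<le> p. full_seq t a b p i) = u + (\<Sum>i\<in>{1..p}. full_seq t a b p i)"
  proof -
    have "{..p} = insert 0 {1..p}" by auto
    then show ?thesis by (simp add: full_seq_def u_def)
  qed
  moreover have "(\<Sum>i\<in>{1..p}. full_seq t a b p i) = (\<Sum>i\<in>{1..p}. (a 1 - (real i - 1)/r))"
  proof (rule sum.cong)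
    fix i assume "i \<in> {1..p}"
    then show "full_seq t a b p i = a 1 - (real i - 1)/r" using aform[of i] by (simp add: full_seq_def)
  qed simp
  ultimately have S: "S \<ge> u + p*(a 1) - real p*(real p - 1)/(2*r)" using arith_sum by simp
  define A where "A = (if p \<ge> 1 then a 1 else u)"
  have S': "S \<ge> u + p*A - real p*(real p - 1)/(2*r)" using S by (cases "p = 0") (auto simp: A_def)
  have A1: "A \<ge> u - 1/r"
    using first_gap r_pos by (auto simp: A_def u_def)
  have A2: "p \<ge> 1 \<Longrightarrow> A \<ge> (real p - 1)/r"
  proof -
    assume p1: "p \<ge> 1"
    have "full_seq t a b p p \<ge> 0" using nonneg by simp
    then have "a p \<ge> 0" using p1 by (simp add: full_seq_def)
    then show ?thesis using aform[OF p1 order_refl] p1 by (simp add: A_def)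
  qed
  have "S / real (p+q+1) \<ge> ((u+1) - 2 + 1/(u+1))/2"
    by (rule fin[OF _ r_pos p1 _ Nlt A1 A2 S']) (auto simp: u_def t_ge)
  then show ?thesis unfolding S_def tu .
qed

end
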